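(* Let $N\ge1$, $K\ge2$ be integers with $N$ divisible by $K$ ($K$ may be odd or even), put $m=N/K$, and let $\alpha\in[0,2]$. Then $\mathcal{B}_\alpha(N,K)$ has a symmetric equilibrium strategy that induces uniform marginals, and in the resulting equilibrium each player's expected payoff equals $K\cdot\frac{m+\alpha/2}{2m+1}$.
   Context: Fix integers $N\ge1$, $K\ge2$ and a real number $\alpha$. The Colonel Blotto game $\mathcal{B}_\alpha(N,K)$ is the two-player simultaneous-move game with players $A,B$, each with pure strategy set $S=\{s\in\{0,1,\ldots,N\}^K:\sum_{k=1}^K s_k=N\}$, in which the payoff of player $i$ at the pure profile $(s^i,s^{-i})$ is $\pi^i(s^i,s^{-i})=\sum_{k=1}^K\big(\mathbf 1[s^i_k>s^{-i}_k]+\tfrac{\alpha}{2}\mathbf 1[s^i_k=s^{-i}_k]\big)$. Mixed strategies are probability distributions on $S$, with expected payoffs under independent randomization. A symmetric equilibrium strategy is a mixed strategy $\sigma$ such that $(\sigma,\sigma)$ is a Nash equilibrium. For a mixed strategy $\sigma$ and battlefield $k$, the marginal $\sigma_k$ is the distribution of $s_k$ when $s\sim\sigma$; with $m=N/K$, $\sigma$ induces uniform marginals if every $\sigma_k$ is the uniform distribution on $\{0,1,\ldots,2m\}$. *)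

theory Defs
  imports "HOL-Probability.Probability"
begin

definition blotto_S :: "nat \<Rightarrow> nat \<Rightarrow> (nat \<Rightarrow> nat) set" where
  "blotto_S N K = {s. (\<forall>k. K \<le> k \<longrightarrow> s k = 0) \<and> (\<forall>k<K. s k \<le> N) \<and> (\<Sum>k<K. s k) = N}"

definition blotto_payoff :: "real \<Rightarrow> nat \<Rightarrow> (nat \<Rightarrow> nat) \<Rightarrow> (nat \<Rightarrow> nat) \<Rightarrow> real" where
  "blotto_payoff \<alpha> K s t =
     (\<Sum>k<K. (if s k > t k then 1 else 0) + (\<alpha> / 2) * (if s k = t k then 1 else 0))"

definition mixed_strategy :: "nat \<Rightarrow> nat \<Rightarrow> (nat \<Rightarrow> nat) pmf \<Rightarrow> bool" where
  "mixed_strategy N K \<sigma> \<longleftrightarrow> set_pmf \<sigma> \<subseteq> blotto_S N K"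

definition exp_payoff :: "real \<Rightarrow> nat \<Rightarrow> (nat \<Rightarrow> nat) pmf \<Rightarrow> (nat \<Rightarrow> nat) pmf \<Rightarrow> real" where
  "exp_payoff \<alpha> K \<sigma> \<tau> = measure_pmf.expectation (pair_pmf \<sigma> \<tau>) (\<lambda>(s, t). blotto_payoff \<alpha> K s t)"

definition nash_eq :: "nat \<Rightarrow> nat \<Rightarrow> real \<Rightarrow> (nat \<Rightarrow> nat) pmf \<Rightarrow> (nat \<Rightarrow> nat) pmf \<Rightarrow> bool" where
  "nash_eq N K \<alpha> \<sigma>A \<sigma>B \<longleftrightarrow>
     mixed_strategy N K \<sigma>A \<and> mixed_strategy N K \<sigma>B \<and>
     (\<forall>\<tau>. mixed_strategy N K \<tau> \<longrightarrow> exp_payoff \<alpha> K \<tau> \<sigma>B \<le> exp_payoff \<alpha> K \<sigma>A \<sigma>B) \<and>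
     (\<forall>\<tau>. mixed_strategy N K \<tau> \<longrightarrow> exp_payoff \<alpha> K \<tau> \<sigma>A \<le> exp_payoff \<alpha> K \<sigma>B \<sigma>A)"

definition symmetric_equilibrium :: "nat \<Rightarrow> nat \<Rightarrow> real \<Rightarrow> (nat \<Rightarrow> nat) pmf \<Rightarrow> bool" where
  "symmetric_equilibrium N K \<alpha> \<sigma> \<longleftrightarrow> nash_eq N K \<alpha> \<sigma> \<sigma>"

definition marginal :: "(nat \<Rightarrow> nat) pmf \<Rightarrow> nat \<Rightarrow> nat pmf" where
  "marginal \<sigma> k = map_pmf (\<lambda>s. s k) \<sigma>"

definition uniform_marginals :: "nat \<Rightarrow> nat \<Rightarrow> (nat \<Rightarrow> nat) pmf \<Rightarrow> bool" where
  "uniform_marginals N K \<sigma> \<longleftrightarrow> (\<forall>k<K. marginal \<sigma> k = pmf_of_set {0 .. 2 * (N div K)})"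

end

theory Submission
  imports Defs
begin

definition bb :: "nat \<Rightarrow> nat \<Rightarrow> nat" where "bb m j = (if j \<le> m then j + m else j - m - 1)"
definition cc :: "nat \<Rightarrow> nat \<Rightarrow> nat" where "cc m j = (if j \<le> m then 2*m - 2*j else 4*m+1-2*j)"
definition pat :: "nat \<Rightarrow> nat \<Rightarrow> nat \<Rightarrow> nat" where "pat m j k = (if even k then j else 2*m - j)"
definition strat :: "nat \<Rightarrow> nat \<Rightarrow> nat \<Rightarrow> nat \<Rightarrow> nat" where
 "strat K m j k = (if K \<le> k then 0 else if even K \<or> k + 3 < K then pat m j k
     else if k + 3 = K then j else if k + 2 = K then bb m j else cc m j)"

lemma strat_le: "j \<le> 2*m \<Longrightarrow> strat K m j k \<le> 2*m"
  by (auto simp: strat_def pat_def bb_def cc_def)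

lemma bb_inj: "inj_on (bb m) {0..2*m}"
  unfolding inj_on_def bb_def by auto

lemma cc_inj: "inj_on (cc m) {0..2*m}"
  unfolding inj_on_def cc_def by auto presburger+

lemma pat_inj: "inj_on (\<lambda>j. pat m j k) {0..2*m}"
  unfolding inj_on_def pat_def by auto

lemma strat_inj: "k < K \<Longrightarrow> inj_on (\<lambda>j. strat K m j k) {0..2*m}"
proof -
  assume "k < K"
  then have "(\<lambda>j. strat K m j k) = (\<lambda>j. pat m j k) \<or> (\<lambda>j. strat K m j k) = (\<lambda>j. j)
     \<or> (\<lambda>j. strat K m j k) = bb m \<or> (\<lambda>j. strat K m j k) = cc m"
    by (auto simp: strat_def fun_eq_iff)
  then show ?thesis using pat_inj bb_inj cc_inj by (metis inj_on_id2)
qed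

lemma strat_image: "k < K \<Longrightarrow> (\<lambda>j. strat K m j k) ` {0..2*m} = {0..2*m}"
  by (rule endo_inj_surj) (auto simp: strat_inj strat_le)

lemma pat_sum: "j \<le> 2*m \<Longrightarrow> (\<Sum>k<2*p. pat m j k) = p * (2*m)"
  by (induction p) (auto simp: pat_def)

lemma strat_sum:
  assumes "2 \<le> K" "j \<le> 2*m"
  shows "(\<Sum>k<K. strat K m j k) = K*m"
proof (cases "even K")
  case True
  then obtain p where p: "K = 2*p" by blast
  have "(\<Sum>k<K. strat K m j k) = (\<Sum>k<2*p. pat m j k)"
    using True p by (intro sum.cong) (auto simp: strat_def)
  then show ?thesis using pat_sum[OF assms(2)] p by simp
next
  case False
  then obtain p where p: "K = 2*p + 3" using assms(1)
    by (metis odd_two_times_div_two_succ add.commute add_Suc_right numeral_3_eq_3 le_add_diff_inverse2 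
        even_add dvd_add_left_iff numeral_2_eq_2 Suc_1 add_2_eq_Suc' odd_pos)
  have "{..<K} = insert (2*p+2) (insert (2*p+1) (insert (2*p) {..<2*p}))"
    using p by auto
  then have "(\<Sum>k<K. strat K m j k) = strat K m j (2*p+2) + strat K m j (2*p+1) + strat K m j (2*p) + (\<Sum>k<2*p. strat K m j k)"
    by simp
  also have "(\<Sum>k<2*p. strat K m j k) = (\<Sum>k<2*p. pat m j k)"
    using p by (intro sum.cong) (auto simp: strat_def)
  finally show ?thesis using pat_sum[OF assms(2), of p] p assms(2)
    by (auto simp: strat_def bb_def cc_def algebra_simps)
qed

definition ww :: "real \<Rightarrow> nat \<Rightarrow> nat \<Rightarrow> real" where
  "ww \<alpha> x v = (if x > v then 1 else 0) + (\<alpha> / 2) * (if x = v then 1 else 0)"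

lemma ww_sum: "(\<Sum>v<n. ww \<alpha> x v) = real (min x n) + (if x < n then \<alpha>/2 else 0)"
  by (induction n) (auto simp: ww_def min_def)

lemma ww_sum_J: "(\<Sum>v\<in>{0..2*m}. ww \<alpha> x v) = real (min x (Suc (2*m))) + (if x \<le> 2*m then \<alpha>/2 else 0)"
proof -
  have "{0..2*m} = {..<Suc (2*m)}" by auto
  then show ?thesis using ww_sum[of \<alpha> x "Suc (2*m)"] by auto
qed

lemma ww_le: "0 \<le> \<alpha> \<Longrightarrow> (\<Sum>v\<in>{0..2*m}. ww \<alpha> x v) \<le> real x + \<alpha>/2"
  unfolding ww_sum_J by (auto simp: min_def)

lemma ww_eq: "x \<le> 2*m \<Longrightarrow> (\<Sum>v\<in>{0..2*m}. ww \<alpha> x v) = real x + \<alpha>/2"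
  unfolding ww_sum_J by (auto simp: min_def)

definition sig :: "nat \<Rightarrow> nat \<Rightarrow> (nat \<Rightarrow> nat) pmf" where
  "sig K m = map_pmf (strat K m) (pmf_of_set {0..2*m})"

lemma set_sig: "set_pmf (sig K m) = strat K m ` {0..2*m}"
  by (simp add: sig_def)

lemma payoff_ww: "blotto_payoff \<alpha> K s t = (\<Sum>k<K. ww \<alpha> (s k) (t k))"
  by (simp add: blotto_payoff_def ww_def)

lemma inner_sig:
  "measure_pmf.expectation (sig K m) (blotto_payoff \<alpha> K s)
    = (\<Sum>k<K. \<Sum>v\<in>{0..2*m}. ww \<alpha> (s k) v) / real (Suc (2*m))"
proof -
  have "measure_pmf.expectation (sig K m) (blotto_payoff \<alpha> K s)
     = (\<Sum>j\<in>{0..2*m}. \<Sum>k<K. ww \<alpha> (s k) (strat K m j k)) / real (Suc (2*m))"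
    by (simp add: sig_def integral_pmf_of_set payoff_ww)
  also have "(\<Sum>j\<in>{0..2*m}. \<Sum>k<K. ww \<alpha> (s k) (strat K m j k))
     = (\<Sum>k<K. \<Sum>j\<in>{0..2*m}. ww \<alpha> (s k) (strat K m j k))"
    by (rule sum.swap)
  also have "\<dots> = (\<Sum>k<K. \<Sum>v\<in>{0..2*m}. ww \<alpha> (s k) v)"
  proof (rule sum.cong[OF refl])
    fix k assume "k \<in> {..<K}"
    then have k: "k < K" by simp
    have "(\<Sum>v\<in>{0..2*m}. ww \<alpha> (s k) v) = (\<Sum>v\<in>(\<lambda>j. strat K m j k) ` {0..2*m}. ww \<alpha> (s k) v)"
      using strat_image[OF k] by simp
    also have "\<dots> = (\<Sum>j\<in>{0..2*m}. ww \<alpha> (s k) (strat K m j k))"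
      by (subst sum.reindex[OF strat_inj[OF k]]) simp
    finally show "(\<Sum>j\<in>{0..2*m}. ww \<alpha> (s k) (strat K m j k)) = (\<Sum>v\<in>{0..2*m}. ww \<alpha> (s k) v)" by simp
  qed
  finally show ?thesis .
qed

lemma finite_S: "finite (blotto_S N K)"
proof -
  have "blotto_S N K \<subseteq> {f. \<forall>x. (x \<in> {..<K} \<longrightarrow> f x \<in> {..N}) \<and> (x \<notin> {..<K} \<longrightarrow> f x = 0)}"
    by (auto simp: blotto_S_def)
  then show ?thesis by (rule finite_subset) (intro finite_set_of_finite_funs; simp)
qed

lemma exp_payoff_sum:
  assumes "set_pmf \<tau> \<subseteq> blotto_S N K" "finite (set_pmf \<sigma>)"
  shows "exp_payoff \<alpha> K \<tau> \<sigma> = (\<Sum>a\<in>blotto_S N K. pmf \<tau> a * measure_pmf.expectation \<sigma> (blotto_payoff \<alpha> K a))"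
proof -
  have "exp_payoff \<alpha> K \<tau> \<sigma> = measure_pmf.expectation (\<tau> \<bind> (\<lambda>s. \<sigma> \<bind> (\<lambda>t. return_pmf (s, t))))
       (\<lambda>(s, t). blotto_payoff \<alpha> K s t)"
    by (simp add: exp_payoff_def pair_pmf_def)
  also have "\<dots> = (\<Sum>a\<in>blotto_S N K. pmf \<tau> a *\<^sub>R measure_pmf.expectation (\<sigma> \<bind> (\<lambda>t. return_pmf (a, t)))
       (\<lambda>(s, t). blotto_payoff \<alpha> K s t))"
    using assms by (intro pmf_expectation_bind) (auto simp: finite_S)
  also have "\<dots> = (\<Sum>a\<in>blotto_S N K. pmf \<tau> a * measure_pmf.expectation \<sigma> (blotto_payoff \<alpha> K a))"
  proof (rule sum.cong[OF refl])
    fix a :: "nat \<Rightarrow> nat"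
    have "\<sigma> \<bind> (\<lambda>t. return_pmf (a, t)) = map_pmf (Pair a) \<sigma>" by (simp add: map_pmf_def)
    then show "pmf \<tau> a *\<^sub>R measure_pmf.expectation (\<sigma> \<bind> (\<lambda>t. return_pmf (a, t))) (\<lambda>(s, t). blotto_payoff \<alpha> K s t)
      = pmf \<tau> a * measure_pmf.expectation \<sigma> (blotto_payoff \<alpha> K a)" by simp
  qed
  finally show ?thesis .
qed

theorem proposition5:
  fixes N K :: nat and \<alpha> :: real
  assumes "N \<ge> 1" and "K \<ge> 2" and "K dvd N"
    and "0 \<le> \<alpha>" and "\<alpha> \<le> 2"
  shows "\<exists>\<sigma>. symmetric_equilibrium N K \<alpha> \<sigma> \<and> uniform_marginals N K \<sigma> \<and>
           exp_payoff \<alpha> K \<sigma> \<sigma> = real K * ((real (N div K) + \<alpha> / 2) / (2 * real (N div K) + 1))"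
proof -
  define m where "m = N div K"
  have N: "N = K * m" using assms(3) by (simp add: m_def)
  define \<sigma> where "\<sigma> = sig K m"
  define V where "V = (real N + real K * (\<alpha>/2)) / real (Suc (2*m))"
  have V: "V = real K * ((real m + \<alpha> / 2) / (2 * real m + 1))"
    by (simp add: V_def N field_simps)
  have fin: "finite (set_pmf \<sigma>)" by (simp add: \<sigma>_def set_sig)
  have ms: "mixed_strategy N K \<sigma>"
  proof -
    have "strat K m j \<in> blotto_S N K" if "j \<le> 2*m" for j
    proof -
      have "2*m \<le> N" using N assms(2) by simp
      then have "\<forall>k<K. strat K m j k \<le> N" using strat_le[OF that] by (meson le_trans)
      moreover have "\<forall>k. K \<le> k \<longrightarrow> strat K m j k = 0" by (simp add: strat_def)
      moreover have "(\<Sum>k<K. strat K m j k) = N" using strat_sum[OF assms(2) that] N by simp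
      ultimately show ?thesis by (simp add: blotto_S_def)
    qed
    then show ?thesis by (auto simp: mixed_strategy_def \<sigma>_def set_sig)
  qed
  have Gle: "measure_pmf.expectation \<sigma> (blotto_payoff \<alpha> K a) \<le> V" if "a \<in> blotto_S N K" for a
  proof -
    have "(\<Sum>k<K. \<Sum>v\<in>{0..2*m}. ww \<alpha> (a k) v) \<le> (\<Sum>k<K. real (a k) + \<alpha>/2)"
      by (intro sum_mono ww_le assms(4))
    also have "\<dots> = real N + real K * (\<alpha>/2)"
      using that by (simp add: blotto_S_def sum.distrib flip: of_nat_sum)
    finally show ?thesis unfolding \<sigma>_def inner_sig V_def by (simp add: divide_right_mono)
  qed
  have Geq: "measure_pmf.expectation \<sigma> (blotto_payoff \<alpha> K a) = V" if "a \<in> set_pmf \<sigma>" for a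
  proof -
    have "a \<in> strat K m ` {0..2*m}" using that by (simp only: \<sigma>_def set_sig)
    then obtain j where j: "j \<le> 2*m" "a = strat K m j" by auto
    have "(\<Sum>k<K. \<Sum>v\<in>{0..2*m}. ww \<alpha> (a k) v) = (\<Sum>k<K. real (a k) + \<alpha>/2)"
      using j by (intro sum.cong refl ww_eq) (simp add: strat_le)
    also have "\<dots> = real N + real K * (\<alpha>/2)"
      using strat_sum[OF assms(2) j(1)] j N by (simp add: sum.distrib flip: of_nat_sum)
    finally show ?thesis unfolding \<sigma>_def inner_sig V_def by simp
  qed
  have le: "exp_payoff \<alpha> K \<tau> \<sigma> \<le> V" if "mixed_strategy N K \<tau>" for \<tau>
  proof -
    have sub: "set_pmf \<tau> \<subseteq> blotto_S N K" using that by (simp add: mixed_strategy_def)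
    have "exp_payoff \<alpha> K \<tau> \<sigma> = (\<Sum>a\<in>blotto_S N K. pmf \<tau> a * measure_pmf.expectation \<sigma> (blotto_payoff \<alpha> K a))"
      by (rule exp_payoff_sum[OF sub fin])
    also have "\<dots> \<le> (\<Sum>a\<in>blotto_S N K. pmf \<tau> a * V)"
      by (intro sum_mono mult_left_mono Gle) auto
    also have "\<dots> = V" using sum_pmf_eq_1[OF finite_S sub] by (simp flip: sum_distrib_right)
    finally show ?thesis .
  qed
  have eq: "exp_payoff \<alpha> K \<sigma> \<sigma> = V"
  proof -
    have sub: "set_pmf \<sigma> \<subseteq> blotto_S N K" using ms by (simp add: mixed_strategy_def)
    have "exp_payoff \<alpha> K \<sigma> \<sigma> = (\<Sum>a\<in>blotto_S N K. pmf \<sigma> a * measure_pmf.expectation \<sigma> (blotto_payoff \<alpha> K a))"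
      by (rule exp_payoff_sum[OF sub fin])
    also have "\<dots> = (\<Sum>a\<in>blotto_S N K. pmf \<sigma> a * V)"
    proof (rule sum.cong[OF refl])
      fix a
      show "pmf \<sigma> a * measure_pmf.expectation \<sigma> (blotto_payoff \<alpha> K a) = pmf \<sigma> a * V"
        by (cases "a \<in> set_pmf \<sigma>") (auto simp: Geq set_pmf_iff)
    qed
    also have "\<dots> = V" using sum_pmf_eq_1[OF finite_S sub] by (simp flip: sum_distrib_right)
    finally show ?thesis .
  qed
  have um: "uniform_marginals N K \<sigma>"
    unfolding uniform_marginals_def marginal_def \<sigma>_def sig_def m_def[symmetric]
  proof (intro allI impI)
    fix k assume k: "k < K"
    have "map_pmf (\<lambda>s. s k) (map_pmf (strat K m) (pmf_of_set {0..2 * m}))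
        = map_pmf (\<lambda>j. strat K m j k) (pmf_of_set {0..2 * m})" by (simp add: pmf.map_comp o_def)
    also have "\<dots> = pmf_of_set {0..2*m}"
      by (subst map_pmf_of_set_inj[OF strat_inj[OF k]]) (auto simp: strat_image[OF k])
    finally show "map_pmf (\<lambda>s. s k) (map_pmf (strat K m) (pmf_of_set {0..2 * m})) = pmf_of_set {0..2 * m}" .
  qed
  have "symmetric_equilibrium N K \<alpha> \<sigma>"
    unfolding symmetric_equilibrium_def nash_eq_def using ms le eq by auto
  then show ?thesis using um eq V unfolding m_def by blast
qed

end
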